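(* Let $(X_{1,\infty},f_{1,\infty},\mu_{1,\infty})$ be a metric nonautonomous dynamical system and let $\mathcal{E}$ be the class of all sequences $\{\mathcal{P}_n\}$ of finite measurable partitions of $X_n$ for which there is $N\ge1$ with $\#\mathcal{P}_n\le N$ for all $n$. Then $\mathcal{E}$ is an admissible class, and it is maximal, i.e., there is no admissible class strictly containing it.
   Context: A metric NDS consists of probability spaces $(X_n,\mathcal{A}_n,\mu_n)$ and measurable maps $f_n:X_n\to X_{n+1}$ with $f_n\mu_n=\mu_{n+1}$; $f_k^n=f_{k+n-1}\circ\cdots\circ f_k$, $f_k^{-n}$ = preimage. An admissible class is a nonempty class $\mathcal{E}$ of sequences of finite measurable partitions $\{\mathcal{P}_n\}$ of $X_n$ such that (A) each member has $\#\mathcal{P}_n\le N$ for some $N$ and all $n$; (B) if $\mathcal{P}_{1,\infty}\in\mathcal{E}$ and $\mathcal{Q}_n$ is coarser than $\mathcal{P}_n$ for all $n$, then $\{\mathcal{Q}_n\}\in\mathcal{E}$; (C) if $\mathcal{P}_{1,\infty}\in\mathcal{E}$ and $m\ge1$ then $\{\bigvee_{i=0}^{m-1}f_k^{-i}\mathcal{P}_{k+i}\}_{k\ge1}\in\mathcal{E}$. *)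

theory Defs
  imports "HOL-Probability.Probability"
begin

text \<open>Indexing convention: spaces are indexed by n = 0,1,2,... (the paper uses 1,2,...).
All spaces X_n live inside one ambient type 'a, as the carriers space (M n).\<close>

definition metric_NDS :: "(nat \<Rightarrow> 'a measure) \<Rightarrow> (nat \<Rightarrow> 'a \<Rightarrow> 'a) \<Rightarrow> bool" where
  "metric_NDS M f \<longleftrightarrow>
     (\<forall>n. prob_space (M n) \<and> f n \<in> M n \<rightarrow>\<^sub>M M (Suc n) \<and> distr (M n) (M (Suc n)) (f n) = M (Suc n))"

fun nds_iter :: "(nat \<Rightarrow> 'a \<Rightarrow> 'a) \<Rightarrow> nat \<Rightarrow> nat \<Rightarrow> 'a \<Rightarrow> 'a" where
  "nds_iter f k 0 = id"
| "nds_iter f k (Suc i) = f (k + i) \<circ> nds_iter f k i"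

definition fin_meas_partition :: "'a measure \<Rightarrow> 'a set set \<Rightarrow> bool" where
  "fin_meas_partition M P \<longleftrightarrow>
     finite P \<and> P \<subseteq> sets M \<and> \<Union>P = space M \<and> disjoint P \<and> {} \<notin> P"

definition coarser :: "'a set set \<Rightarrow> 'a set set \<Rightarrow> bool" where
  "coarser Q P \<longleftrightarrow> (\<forall>A\<in>P. \<exists>B\<in>Q. A \<subseteq> B)"

definition preimage_part :: "'a measure \<Rightarrow> ('a \<Rightarrow> 'a) \<Rightarrow> 'a set set \<Rightarrow> 'a set set" where
  "preimage_part M g P = {g -` A \<inter> space M | A. A \<in> P} - {{}}"

definition join_parts :: "nat \<Rightarrow> (nat \<Rightarrow> 'a set set) \<Rightarrow> 'a set set" where
  "join_parts m Q = {\<Inter>i\<in>{..<m}. A i | A. \<forall>i<m. A i \<in> Q i} - {{}}"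

definition admissible_class ::
  "(nat \<Rightarrow> 'a measure) \<Rightarrow> (nat \<Rightarrow> 'a \<Rightarrow> 'a) \<Rightarrow> (nat \<Rightarrow> 'a set set) set \<Rightarrow> bool" where
  "admissible_class M f E \<longleftrightarrow>
     E \<noteq> {} \<and>
     (\<forall>P\<in>E. \<forall>n. fin_meas_partition (M n) (P n)) \<and>
     (\<forall>P\<in>E. \<exists>N. \<forall>n. card (P n) \<le> N) \<and>
     (\<forall>P\<in>E. \<forall>Q. (\<forall>n. fin_meas_partition (M n) (Q n) \<and> coarser (Q n) (P n)) \<longrightarrow> Q \<in> E) \<and>
     (\<forall>P\<in>E. \<forall>m\<ge>1.
        (\<lambda>k. join_parts m (\<lambda>i. preimage_part (M k) (nds_iter f k i) (P (k + i)))) \<in> E)"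

definition bounded_partition_class ::
  "(nat \<Rightarrow> 'a measure) \<Rightarrow> (nat \<Rightarrow> 'a set set) set" where
  "bounded_partition_class M =
     {P. (\<forall>n. fin_meas_partition (M n) (P n)) \<and> (\<exists>N\<ge>1. \<forall>n. card (P n) \<le> N)}"

end

theory Submission
  imports Defs
begin

lemma iter_meas:
  assumes "metric_NDS M f"
  shows "nds_iter f k i \<in> M k \<rightarrow>\<^sub>M M (k+i)"
proof (induction i)
  case 0 then show ?case by simp
next
  case (Suc i)
  have "f (k+i) \<in> M (k+i) \<rightarrow>\<^sub>M M (Suc (k+i))" using assms unfolding metric_NDS_def by blast
  then show ?case using Suc by (simp add: measurable_comp)
qed

definition pfam :: "'a measure \<Rightarrow> 'a set set \<Rightarrow> bool" where
  "pfam M Q \<longleftrightarrow> finite Q \<and> Q \<subseteq> sets M \<and> \<Union>Q = space M \<and> disjoint Q"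

lemma preimage_pfam:
  assumes g: "g \<in> Mk \<rightarrow>\<^sub>M M'" and P: "fin_meas_partition M' P"
  shows "pfam Mk (preimage_part Mk g P) \<and> card (preimage_part Mk g P) \<le> card P"
proof -
  have eq: "preimage_part Mk g P = ((\<lambda>A. g -` A \<inter> space Mk) ` P) - {{}}"
    unfolding preimage_part_def by blast
  have fin: "finite P" using P unfolding fin_meas_partition_def by blast
  have "card (preimage_part Mk g P) \<le> card ((\<lambda>A. g -` A \<inter> space Mk) ` P)"
    unfolding eq using fin by (intro card_mono) auto
  also have "\<dots> \<le> card P" using card_image_le fin by blast
  finally have c: "card (preimage_part Mk g P) \<le> card P" .
  have s: "preimage_part Mk g P \<subseteq> sets Mk"
    unfolding eq using P g unfolding fin_meas_partition_def by (auto intro: measurable_sets)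
  have u: "\<Union>(preimage_part Mk g P) = space Mk"
  proof
    show "\<Union>(preimage_part Mk g P) \<subseteq> space Mk" unfolding eq by auto
    show "space Mk \<subseteq> \<Union>(preimage_part Mk g P)"
    proof
      fix x assume x: "x \<in> space Mk"
      then have "g x \<in> space M'" using g by (meson measurable_space)
      then obtain A where "A \<in> P" "g x \<in> A" using P unfolding fin_meas_partition_def by blast
      then show "x \<in> \<Union>(preimage_part Mk g P)" unfolding eq using x by blast
    qed
  qed
  have d: "disjoint (preimage_part Mk g P)"
    unfolding disjoint_def eq
  proof (intro ballI impI)
    fix a b assume a: "a \<in> (\<lambda>A. g -` A \<inter> space Mk) ` P - {{}}" and b: "b \<in> (\<lambda>A. g -` A \<inter> space Mk) ` P - {{}}"
      and ne: "a \<noteq> b"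
    obtain A where A: "A \<in> P" "a = g -` A \<inter> space Mk" using a by blast
    obtain B where B: "B \<in> P" "b = g -` B \<inter> space Mk" using b by blast
    have "A \<noteq> B" using ne A B by blast
    then have "A \<inter> B = {}" using A B P unfolding fin_meas_partition_def disjoint_def by blast
    then show "a \<inter> b = {}" using A B by blast
  qed
  show ?thesis using c s u d fin eq unfolding pfam_def by auto
qed

lemma join_part:
  assumes m: "m \<ge> 1" and Q: "\<And>i. i < m \<Longrightarrow> pfam Mk (Q i)"
  shows "fin_meas_partition Mk (join_parts m Q) \<and> card (join_parts m Q) \<le> (\<Prod>i<m. card (Q i))"
proof -
  let ?h = "\<lambda>A. \<Inter>i\<in>{..<m}. A i"
  have sub: "join_parts m Q \<subseteq> ?h ` (PiE {..<m} Q)"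
  proof
    fix S assume "S \<in> join_parts m Q"
    then obtain A where A: "S = ?h A" "\<forall>i<m. A i \<in> Q i" unfolding join_parts_def by blast
    have "restrict A {..<m} \<in> PiE {..<m} Q" using A by auto
    moreover have "?h (restrict A {..<m}) = S" using A by auto
    ultimately show "S \<in> ?h ` (PiE {..<m} Q)" by blast
  qed
  have finQ: "\<forall>i\<in>{..<m}. finite (Q i)" using Q unfolding pfam_def by blast
  have finPi: "finite (PiE {..<m} Q)" using finQ by (intro finite_PiE) auto
  have fin: "finite (join_parts m Q)" using sub finPi finite_subset by blast
  have "card (join_parts m Q) \<le> card (?h ` (PiE {..<m} Q))" using sub finPi by (intro card_mono) auto
  also have "\<dots> \<le> card (PiE {..<m} Q)" using finPi card_image_le by blast
  also have "\<dots> = (\<Prod>i<m. card (Q i))" by (simp add: card_PiE)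
  finally have c: "card (join_parts m Q) \<le> (\<Prod>i<m. card (Q i))" .
  have s: "join_parts m Q \<subseteq> sets Mk"
  proof
    fix S assume "S \<in> join_parts m Q"
    then obtain A where A: "S = ?h A" "\<forall>i<m. A i \<in> Q i" unfolding join_parts_def by blast
    have "\<forall>i\<in>{..<m}. A i \<in> sets Mk" using A Q unfolding pfam_def by blast
    moreover have "{..<m} \<noteq> {}" proof -
      have "0 \<in> {..<m}" using m by simp
      then show ?thesis by blast
    qed
    ultimately have "(\<Inter>i\<in>{..<m}. A i) \<in> sets Mk" by (intro sets.finite_INT) auto
    then show "S \<in> sets Mk" using A(1) by simp
  qed
  have u: "\<Union>(join_parts m Q) = space Mk"
  proof
    show "\<Union>(join_parts m Q) \<subseteq> space Mk"
    proof
      fix x assume "x \<in> \<Union>(join_parts m Q)"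
      then obtain A where A: "x \<in> ?h A" "\<forall>i<m. A i \<in> Q i" unfolding join_parts_def by blast
      have "x \<in> A 0" using A m by auto
      moreover have "A 0 \<in> Q 0" using A m by auto
      ultimately show "x \<in> space Mk" using Q[of 0] m unfolding pfam_def by auto
    qed
    show "space Mk \<subseteq> \<Union>(join_parts m Q)"
    proof
      fix x assume x: "x \<in> space Mk"
      define A where "A i = (SOME B. B \<in> Q i \<and> x \<in> B)" for i
      have A: "A i \<in> Q i \<and> x \<in> A i" if "i < m" for i
      proof -
        have "\<exists>B. B \<in> Q i \<and> x \<in> B" using Q[OF that] x unfolding pfam_def by blast
        then show ?thesis unfolding A_def by (rule someI_ex)
      qed
      have "x \<in> ?h A" using A by auto
      moreover then have "?h A \<in> join_parts m Q" using A unfolding join_parts_def by blast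
      ultimately show "x \<in> \<Union>(join_parts m Q)" by blast
    qed
  qed
  have d: "disjoint (join_parts m Q)"
    unfolding disjoint_def
  proof (intro ballI impI)
    fix a b assume a: "a \<in> join_parts m Q" and b: "b \<in> join_parts m Q" and ne: "a \<noteq> b"
    obtain A where A: "a = ?h A" "\<forall>i<m. A i \<in> Q i" using a unfolding join_parts_def by blast
    obtain B where B: "b = ?h B" "\<forall>i<m. B i \<in> Q i" using b unfolding join_parts_def by blast
    show "a \<inter> b = {}"
    proof (rule ccontr)
      assume "a \<inter> b \<noteq> {}"
      then obtain x where x: "x \<in> a" "x \<in> b" by blast
      have "A i = B i" if i: "i < m" for i
      proof (rule ccontr)
        assume "A i \<noteq> B i"
        then have "A i \<inter> B i = {}" using Q[OF i] A B i unfolding pfam_def disjoint_def by blast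
        moreover have "x \<in> A i" "x \<in> B i" using x A B i by auto
        ultimately show False by blast
      qed
      then have "a = b" using A B by auto
      then show False using ne by blast
    qed
  qed
  have "{} \<notin> join_parts m Q" unfolding join_parts_def by blast
  then show ?thesis using c s u d fin unfolding fin_meas_partition_def by blast
qed

lemma coarser_card:
  assumes P: "fin_meas_partition M P" and Q: "fin_meas_partition M Q" and c: "coarser Q P"
  shows "card Q \<le> card P"
proof -
  have "Q \<subseteq> (\<lambda>A. SOME B. B \<in> Q \<and> A \<subseteq> B) ` P"
  proof
    fix B assume B: "B \<in> Q"
    then obtain x where x: "x \<in> B" using Q unfolding fin_meas_partition_def by (metis ex_in_conv)
    then have "x \<in> space M" using B Q unfolding fin_meas_partition_def by blast
    then obtain A where A: "A \<in> P" "x \<in> A" using P unfolding fin_meas_partition_def by blast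
    have ex: "\<exists>B. B \<in> Q \<and> A \<subseteq> B" using c A unfolding coarser_def by blast
    define B' where "B' = (SOME B. B \<in> Q \<and> A \<subseteq> B)"
    have B': "B' \<in> Q \<and> A \<subseteq> B'" unfolding B'_def using ex by (rule someI_ex)
    have "B' = B"
    proof (rule ccontr)
      assume "B' \<noteq> B"
      then have "B' \<inter> B = {}" using B B' Q unfolding fin_meas_partition_def disjoint_def by blast
      then show False using x A B' by blast
    qed
    then show "B \<in> (\<lambda>A. SOME B. B \<in> Q \<and> A \<subseteq> B) ` P" using A B'_def by blast
  qed
  moreover have "finite P" using P unfolding fin_meas_partition_def by blast
  ultimately have "card Q \<le> card ((\<lambda>A. SOME B. B \<in> Q \<and> A \<subseteq> B) ` P)"
    by (intro card_mono) auto
  also have "\<dots> \<le> card P" using \<open>finite P\<close> by (rule card_image_le)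
  finally show ?thesis .
qed

theorem mainTheorem10:
  fixes M :: "nat \<Rightarrow> 'a measure" and f :: "nat \<Rightarrow> 'a \<Rightarrow> 'a"
  assumes "metric_NDS M f"
  shows "admissible_class M f (bounded_partition_class M) \<and>
         \<not> (\<exists>E'. admissible_class M f E' \<and> bounded_partition_class M \<subset> E')"
proof
  let ?B = "bounded_partition_class M"
  have ne: "?B \<noteq> {}"
  proof -
    have "fin_meas_partition (M n) {space (M n)}" for n
    proof -
      have "prob_space (M n)" using assms unfolding metric_NDS_def by blast
      then have "space (M n) \<noteq> {}" by (simp add: prob_space.not_empty)
      then show ?thesis unfolding fin_meas_partition_def disjoint_def by auto
    qed
    then have "(\<lambda>n. {space (M n)}) \<in> ?B" unfolding bounded_partition_class_def by auto
    then show ?thesis by blast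
  qed
  have C: "Q \<in> ?B" if P: "P \<in> ?B" and Q: "\<forall>n. fin_meas_partition (M n) (Q n) \<and> coarser (Q n) (P n)" for P Q
  proof -
    obtain N where N: "N \<ge> 1" "\<forall>n. card (P n) \<le> N" using P unfolding bounded_partition_class_def by blast
    have Pp: "\<forall>n. fin_meas_partition (M n) (P n)" using P unfolding bounded_partition_class_def by blast
    have "card (Q n) \<le> N" for n
    proof -
      have "card (Q n) \<le> card (P n)" using coarser_card[of "M n" "P n" "Q n"] Q Pp by blast
      then show ?thesis using N(2) le_trans by blast
    qed
    then show ?thesis using Q N unfolding bounded_partition_class_def by blast
  qed
  have J: "(\<lambda>k. join_parts m (\<lambda>i. preimage_part (M k) (nds_iter f k i) (P (k + i)))) \<in> ?B"
    if P: "P \<in> ?B" and m: "m \<ge> 1" for P m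
  proof -
    obtain N where N: "N \<ge> 1" "\<forall>n. card (P n) \<le> N" using P unfolding bounded_partition_class_def by blast
    have "fin_meas_partition (M k) (join_parts m (\<lambda>i. preimage_part (M k) (nds_iter f k i) (P (k + i))))
       \<and> card (join_parts m (\<lambda>i. preimage_part (M k) (nds_iter f k i) (P (k + i)))) \<le> N ^ m" for k
    proof -
      have pf: "pfam (M k) (preimage_part (M k) (nds_iter f k i) (P (k + i)))
          \<and> card (preimage_part (M k) (nds_iter f k i) (P (k + i))) \<le> N" for i
      proof -
        have "fin_meas_partition (M (k+i)) (P (k+i))" using P unfolding bounded_partition_class_def by blast
        then have h: "pfam (M k) (preimage_part (M k) (nds_iter f k i) (P (k + i)))
          \<and> card (preimage_part (M k) (nds_iter f k i) (P (k + i))) \<le> card (P (k+i))"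
          using preimage_pfam[OF iter_meas[OF assms, of k i]] by blast
        have "card (P (k+i)) \<le> N" using N(2) by blast
        then show ?thesis using h by linarith
      qed
      have jp: "fin_meas_partition (M k) (join_parts m (\<lambda>i. preimage_part (M k) (nds_iter f k i) (P (k + i))))
         \<and> card (join_parts m (\<lambda>i. preimage_part (M k) (nds_iter f k i) (P (k + i))))
           \<le> (\<Prod>i<m. card (preimage_part (M k) (nds_iter f k i) (P (k + i))))"
        using join_part[OF m, of "M k" "\<lambda>i. preimage_part (M k) (nds_iter f k i) (P (k + i))"] pf by blast
      have "(\<Prod>i<m. card (preimage_part (M k) (nds_iter f k i) (P (k + i)))) \<le> (\<Prod>i<m. N)"
        using pf by (intro prod_mono) auto
      moreover have "(\<Prod>i<m. N) = N ^ m" by simp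
      ultimately show ?thesis using jp by (metis (no_types, lifting) order.trans)
    qed
    moreover have "N ^ m \<ge> 1" using N by simp
    ultimately show ?thesis unfolding bounded_partition_class_def by blast
  qed
  show "admissible_class M f ?B"
    unfolding admissible_class_def
  proof (intro conjI)
    show "?B \<noteq> {}" by (rule ne)
    show "\<forall>P\<in>?B. \<forall>n. fin_meas_partition (M n) (P n)" unfolding bounded_partition_class_def by blast
    show "\<forall>P\<in>?B. \<exists>N. \<forall>n. card (P n) \<le> N" unfolding bounded_partition_class_def by blast
    show "\<forall>P\<in>?B. \<forall>Q. (\<forall>n. fin_meas_partition (M n) (Q n) \<and> coarser (Q n) (P n)) \<longrightarrow> Q \<in> ?B"
      using C by blast
    show "\<forall>P\<in>?B. \<forall>m\<ge>1. (\<lambda>k. join_parts m (\<lambda>i. preimage_part (M k) (nds_iter f k i) (P (k + i)))) \<in> ?B"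
      using J by blast
  qed
next
  show "\<not> (\<exists>E'. admissible_class M f E' \<and> bounded_partition_class M \<subset> E')"
  proof
    assume "\<exists>E'. admissible_class M f E' \<and> bounded_partition_class M \<subset> E'"
    then obtain E' where E: "admissible_class M f E'" "bounded_partition_class M \<subset> E'" by blast
    have "E' \<subseteq> bounded_partition_class M"
    proof
      fix P assume P: "P \<in> E'"
      then obtain N where "\<forall>n. card (P n) \<le> N" using E unfolding admissible_class_def by blast
      then have "\<forall>n. card (P n) \<le> max N 1" by (meson le_trans max.cobounded1)
      moreover have "\<forall>n. fin_meas_partition (M n) (P n)" using E P unfolding admissible_class_def by blast
      ultimately show "P \<in> bounded_partition_class M" unfolding bounded_partition_class_def
        using max.cobounded2[of 1 N] by blast
    qed
    then show False using E by blast
  qed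
qed

end
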